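(* Under the hypotheses and with the notation of the context, the function $\nu\colon K\times K\to\widehat H$, $\nu(y_1,y_2)(h)=\tilde\nu(y_1,y_2)(h)(1)$ (i.e. $\nu=\psi_1\circ\tilde\nu$), takes values in $\widehat H$ and satisfies $\nu(y_2,y_3)\,\nu(y_1y_2,y_3)^{-1}\,\nu(y_1,y_2y_3)\,\big(\nu(y_1,y_2)^{y_3}\big)^{-1}=1$, hence defines an element of $\underline H^2(K,\widehat H)$.
   Context: $k$ algebraically closed of characteristic $0$; $G$ finite, $\omega\in Z^3(G,k^\times)$ normalized; $H\trianglelefteq G$ abelian; $K=G/H$, $p(g)=Hg$, $u\colon K\to G$ a section with $u(p(1_G))=1_G$, $x\triangleleft g=p(u(x)g)$. $C=\mathrm{Fun}(K,k^\times)$ with left $G$-action $(g\triangleright f)(x)=f(x\triangleleft g)$; normalized cochains, multiplicative coboundary $\delta$. $\mu\in C^2(G,C)$ with $\delta^2\mu=\omega$, and ${}^y\mu/\mu$ trivial in $H^2(G,C)$ for all $y\in K$, where $({}^y\gamma)(g_1,\dots,g_n)(x)=\gamma(g_1,\dots,g_n)(yx)$. For each $y\in K$, $\eta_y\in C^1(G,C)$ with $\delta^1\eta_y={}^y\mu/\mu$, and $\tilde\nu(y_1,y_2)={}^{y_2}\eta_{y_1}\eta_{y_2}/\eta_{y_1y_2}\in Z^1(G,C)$. $\widehat H=\mathrm{Hom}(H,k^\times)$ is a right $K$-module via $\rho^y(h)=\rho(u(y)hu(y)^{-1})$. $\underline H^2(K,\widehat H)$ is the second cohomology with coboundary $(\underline\delta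 f)(y_1,\dots,y_{n+1})=f(y_2,\dots)\prod_i f(\dots,y_iy_{i+1},\dots)^{(-1)^i}(f(y_1,\dots,y_n)^{y_{n+1}})^{(-1)^{n+1}}$. *)

theory Defs
  imports "HOL-Algebra.Coset" "HOL-Computational_Algebra.Polynomial"
begin

definition alg_closed :: "'k::field itself \<Rightarrow> bool" where
  "alg_closed (_ :: 'k itself) \<longleftrightarrow>
     (\<forall>q :: 'k poly. degree q \<ge> 1 \<longrightarrow> (\<exists>x. poly q x = 0))"

definition char_zero_field :: "'k::field itself \<Rightarrow> bool" where
  "char_zero_field (_ :: 'k itself) \<longleftrightarrow> (\<forall>n::nat. n > 0 \<longrightarrow> (of_nat n :: 'k) \<noteq> 0)"

definition qact :: "('g, 'm) monoid_scheme \<Rightarrow> 'g set \<Rightarrow> ('g set \<Rightarrow> 'g) \<Rightarrow> 'g set \<Rightarrow> 'g \<Rightarrow> 'g set" where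
  "qact G H u x g = H #>\<^bsub>G\<^esub> (u x \<otimes>\<^bsub>G\<^esub> g)"

(* left G-action on C = Fun(K, k^x): (g \<triangleright> f)(x) = f(x \<triangleleft> g) *)
definition actC :: "('g, 'm) monoid_scheme \<Rightarrow> 'g set \<Rightarrow> ('g set \<Rightarrow> 'g) \<Rightarrow> 'g \<Rightarrow> ('g set \<Rightarrow> 'k) \<Rightarrow> ('g set \<Rightarrow> 'k)" where
  "actC G H u g f = (\<lambda>x. f (qact G H u x g))"

definition cob1 :: "('g, 'm) monoid_scheme \<Rightarrow> 'g set \<Rightarrow> ('g set \<Rightarrow> 'g) \<Rightarrow> ('g \<Rightarrow> 'g set \<Rightarrow> 'k::field)
    \<Rightarrow> 'g \<Rightarrow> 'g \<Rightarrow> 'g set \<Rightarrow> 'k" where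
  "cob1 G H u \<eta> g1 g2 = (\<lambda>x. actC G H u g1 (\<eta> g2) x * \<eta> g1 x / \<eta> (g1 \<otimes>\<^bsub>G\<^esub> g2) x)"

definition cob2 :: "('g, 'm) monoid_scheme \<Rightarrow> 'g set \<Rightarrow> ('g set \<Rightarrow> 'g) \<Rightarrow> ('g \<Rightarrow> 'g \<Rightarrow> 'g set \<Rightarrow> 'k::field)
    \<Rightarrow> 'g \<Rightarrow> 'g \<Rightarrow> 'g \<Rightarrow> 'g set \<Rightarrow> 'k" where
  "cob2 G H u \<mu> g1 g2 g3 = (\<lambda>x. actC G H u g1 (\<mu> g2 g3) x * \<mu> g1 (g2 \<otimes>\<^bsub>G\<^esub> g3) x
      / (\<mu> (g1 \<otimes>\<^bsub>G\<^esub> g2) g3 x * \<mu> g1 g2 x))"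

definition shift2 :: "('g, 'm) monoid_scheme \<Rightarrow> 'g set \<Rightarrow> 'g set \<Rightarrow> ('g \<Rightarrow> 'g \<Rightarrow> 'g set \<Rightarrow> 'k)
    \<Rightarrow> 'g \<Rightarrow> 'g \<Rightarrow> 'g set \<Rightarrow> 'k" where
  "shift2 G H y \<gamma> g1 g2 = (\<lambda>x. \<gamma> g1 g2 (y \<otimes>\<^bsub>G Mod H\<^esub> x))"

definition shift1 :: "('g, 'm) monoid_scheme \<Rightarrow> 'g set \<Rightarrow> 'g set \<Rightarrow> ('g \<Rightarrow> 'g set \<Rightarrow> 'k)
    \<Rightarrow> 'g \<Rightarrow> 'g set \<Rightarrow> 'k" where
  "shift1 G H y \<gamma> g = (\<lambda>x. \<gamma> g (y \<otimes>\<^bsub>G Mod H\<^esub> x))"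

definition nu_tilde :: "('g, 'm) monoid_scheme \<Rightarrow> 'g set \<Rightarrow> ('g set \<Rightarrow> 'g \<Rightarrow> 'g set \<Rightarrow> 'k::field)
    \<Rightarrow> 'g set \<Rightarrow> 'g set \<Rightarrow> 'g \<Rightarrow> 'g set \<Rightarrow> 'k" where
  "nu_tilde G H \<eta> y1 y2 = (\<lambda>g x. shift1 G H y2 (\<eta> y1) g x * \<eta> y2 g x / \<eta> (y1 \<otimes>\<^bsub>G Mod H\<^esub> y2) g x)"

definition nu :: "('g, 'm) monoid_scheme \<Rightarrow> 'g set \<Rightarrow> ('g set \<Rightarrow> 'g \<Rightarrow> 'g set \<Rightarrow> 'k::field)
    \<Rightarrow> 'g set \<Rightarrow> 'g set \<Rightarrow> 'g \<Rightarrow> 'k" where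
  "nu G H \<eta> y1 y2 = (\<lambda>h. nu_tilde G H \<eta> y1 y2 h \<one>\<^bsub>G Mod H\<^esub>)"

definition is_char :: "('g, 'm) monoid_scheme \<Rightarrow> 'g set \<Rightarrow> ('g \<Rightarrow> 'k::field) \<Rightarrow> bool" where
  "is_char G H \<rho> \<longleftrightarrow> (\<forall>h\<in>H. \<rho> h \<noteq> 0) \<and>
     (\<forall>h\<in>H. \<forall>h'\<in>H. \<rho> (h \<otimes>\<^bsub>G\<^esub> h') = \<rho> h * \<rho> h')"

definition char_act :: "('g, 'm) monoid_scheme \<Rightarrow> ('g set \<Rightarrow> 'g) \<Rightarrow> ('g \<Rightarrow> 'k) \<Rightarrow> 'g set \<Rightarrow> ('g \<Rightarrow> 'k)" where
  "char_act G u \<rho> y = (\<lambda>h. \<rho> (u y \<otimes>\<^bsub>G\<^esub> h \<otimes>\<^bsub>G\<^esub> inv\<^bsub>G\<^esub> (u y)))"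

end

theory Submission
  imports Defs
begin


lemma qact_eq:
  assumes N: "H \<lhd> G" and x: "x \<in> carrier (G Mod H)" and g: "g \<in> carrier G"
    and u: "u x \<in> carrier G" "H #>\<^bsub>G\<^esub> u x = x"
  shows "qact G H u x g = x \<otimes>\<^bsub>G Mod H\<^esub> (H #>\<^bsub>G\<^esub> g)"
proof -
  interpret normal H G by (rule N)
  show ?thesis unfolding qact_def using u g rcos_sum[of "u x" g] by simp
qed

lemma coset_in_K:
  assumes N: "H \<lhd> G" and g: "g \<in> carrier G"
  shows "H #>\<^bsub>G\<^esub> g \<in> carrier (G Mod H)"
proof -
  interpret normal H G by (rule N)
  show ?thesis using g by (simp add: FactGroup_def rcosetsI subset)
qed


lemma field_coc_aux:
  fixes A1 B1 C1 A2 B2 C2 A3 B3 C3 r1 r2 r3 :: "'k::field"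
  assumes "A1*B1/C1 = r1" "A2*B2/C2 = r2" "A3*B3/C3 = r3" "r1*r2 = r3"
    and "C1 \<noteq> 0" "C2 \<noteq> 0" "C3 \<noteq> 0" "A3 \<noteq> 0" "B3 \<noteq> 0"
  shows "(A1*A2/A3)*(B1*B2/B3) = C1*C2/C3"
proof -
  have "A1*B1 = r1*C1" "A2*B2 = r2*C2" "A3*B3 = r3*C3" using assms by (auto simp: field_simps)
  have "(A1*A2/A3)*(B1*B2/B3) = (A1*B1)*(A2*B2)/(A3*B3)" by (simp add: ac_simps)
  also have "\<dots> = (r1*C1)*(r2*C2)/(r3*C3)" using \<open>A1*B1 = r1*C1\<close> \<open>A2*B2 = r2*C2\<close> \<open>A3*B3 = r3*C3\<close>
    by simp
  also have "\<dots> = C1*C2/C3"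
  proof -
    have "r3 \<noteq> 0" using assms(3,7,8,9) by auto
    then have "r1 \<noteq> 0" "r2 \<noteq> 0" using assms(4) by auto
    then show ?thesis using assms(4) assms(5-9) \<open>r3 \<noteq> 0\<close> by (simp add: field_simps)
  qed
  finally show ?thesis .
qed

theorem corollary4p3:
  fixes G :: "('g, 'm) monoid_scheme" and H :: "'g set"
    and u :: "'g set \<Rightarrow> 'g"
    and \<omega> :: "'g \<Rightarrow> 'g \<Rightarrow> 'g \<Rightarrow> 'k::field"
    and \<mu> :: "'g \<Rightarrow> 'g \<Rightarrow> 'g set \<Rightarrow> 'k"
    and \<eta> :: "'g set \<Rightarrow> 'g \<Rightarrow> 'g set \<Rightarrow> 'k"
  assumes k_closed: "alg_closed TYPE('k)"
    and k_char0: "char_zero_field TYPE('k)"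
    and grp: "group G" and fin: "finite (carrier G)"
    and normal: "H \<lhd> G"
    and abelian: "\<forall>a\<in>H. \<forall>b\<in>H. a \<otimes>\<^bsub>G\<^esub> b = b \<otimes>\<^bsub>G\<^esub> a"
    and u_sec: "\<forall>x\<in>carrier (G Mod H). u x \<in> carrier G \<and> H #>\<^bsub>G\<^esub> u x = x"
    and u_one: "u (H #>\<^bsub>G\<^esub> \<one>\<^bsub>G\<^esub>) = \<one>\<^bsub>G\<^esub>"
    \<comment> \<open>\<omega> \<in> Z^3(G, k^x), normalized\<close>
    and \<omega>_nz: "\<forall>a\<in>carrier G. \<forall>b\<in>carrier G. \<forall>c\<in>carrier G. \<omega> a b c \<noteq> 0"
    and \<omega>_norm: "\<forall>a\<in>carrier G. \<forall>b\<in>carrier G.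
        \<omega> \<one>\<^bsub>G\<^esub> a b = 1 \<and> \<omega> a \<one>\<^bsub>G\<^esub> b = 1 \<and> \<omega> a b \<one>\<^bsub>G\<^esub> = 1"
    and \<omega>_cocycle: "\<forall>a\<in>carrier G. \<forall>b\<in>carrier G. \<forall>c\<in>carrier G. \<forall>d\<in>carrier G.
        \<omega> b c d * \<omega> a (b \<otimes>\<^bsub>G\<^esub> c) d * \<omega> a b c
          = \<omega> (a \<otimes>\<^bsub>G\<^esub> b) c d * \<omega> a b (c \<otimes>\<^bsub>G\<^esub> d)"
    \<comment> \<open>\<mu> \<in> C^2(G, C), normalized, with \<delta>\<mu> = \<omega>\<close>
    and \<mu>_nz: "\<forall>a\<in>carrier G. \<forall>b\<in>carrier G. \<forall>x\<in>carrier (G Mod H). \<mu> a b x \<noteq> 0"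
    and \<mu>_norm: "\<forall>a\<in>carrier G. \<forall>x\<in>carrier (G Mod H).
        \<mu> \<one>\<^bsub>G\<^esub> a x = 1 \<and> \<mu> a \<one>\<^bsub>G\<^esub> x = 1"
    and \<mu>_cob: "\<forall>a\<in>carrier G. \<forall>b\<in>carrier G. \<forall>c\<in>carrier G. \<forall>x\<in>carrier (G Mod H).
        cob2 G H u \<mu> a b c x = \<omega> a b c"
    \<comment> \<open>\<eta>_y \<in> C^1(G, C), normalized, with \<delta>\<eta>_y = ^y\<mu>/\<mu>\<close>
    and \<eta>_nz: "\<forall>y\<in>carrier (G Mod H). \<forall>a\<in>carrier G. \<forall>x\<in>carrier (G Mod H). \<eta> y a x \<noteq> 0"
    and \<eta>_norm: "\<forall>y\<in>carrier (G Mod H). \<forall>x\<in>carrier (G Mod H). \<eta> y \<one>\<^bsub>G\<^esub> x = 1"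
    and \<eta>_cob: "\<forall>y\<in>carrier (G Mod H). \<forall>a\<in>carrier G. \<forall>b\<in>carrier G. \<forall>x\<in>carrier (G Mod H).
        cob1 G H u (\<eta> y) a b x = shift2 G H y \<mu> a b x / \<mu> a b x"
  shows "(\<forall>y1\<in>carrier (G Mod H). \<forall>y2\<in>carrier (G Mod H). is_char G H (nu G H \<eta> y1 y2))
    \<and> (\<forall>y1\<in>carrier (G Mod H). \<forall>y2\<in>carrier (G Mod H). \<forall>y3\<in>carrier (G Mod H). \<forall>h\<in>H.
         nu G H \<eta> y2 y3 h / nu G H \<eta> (y1 \<otimes>\<^bsub>G Mod H\<^esub> y2) y3 h
         * nu G H \<eta> y1 (y2 \<otimes>\<^bsub>G Mod H\<^esub> y3) h / char_act G u (nu G H \<eta> y1 y2) y3 h = 1)"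
proof -
  interpret N: normal H G by (rule normal)
  interpret K: group "G Mod H" by (rule N.factorgroup_is_group)
  let ?K = "carrier (G Mod H)"
  have HK: "H \<subseteq> carrier G" by (rule N.subset)
  have q1: "qact G H u x g = x \<otimes>\<^bsub>G Mod H\<^esub> (H #>\<^bsub>G\<^esub> g)" if "x \<in> ?K" "g \<in> carrier G" for x g
    using qact_eq[OF normal that] u_sec that by blast
  have qK: "qact G H u x g \<in> ?K" if "x \<in> ?K" "g \<in> carrier G" for x g
    using q1[OF that] coset_in_K[OF normal that(2)] that K.m_closed by fastforce
  have q2: "y \<otimes>\<^bsub>G Mod H\<^esub> qact G H u x g = qact G H u (y \<otimes>\<^bsub>G Mod H\<^esub> x) g"
    if "y \<in> ?K" "x \<in> ?K" "g \<in> carrier G" for x y g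
  proof -
    have c: "H #>\<^bsub>G\<^esub> g \<in> ?K" using coset_in_K[OF normal that(3)] .
    have yx: "y \<otimes>\<^bsub>G Mod H\<^esub> x \<in> ?K" using that K.m_closed by blast
    show ?thesis using q1[OF that(2,3)] q1[OF yx that(3)] K.m_assoc[OF that(1,2) c] by metis
  qed
  have q3: "qact G H u x h = x" if "x \<in> ?K" "h \<in> H" for x h
  proof -
    have "H #>\<^bsub>G\<^esub> h = H" using N.rcos_const[OF grp that(2)] .
    then show ?thesis using q1[OF that(1)] that HK by (metis K.r_one one_FactGroup subsetD)
  qed
  have one1: "H #>\<^bsub>G\<^esub> \<one>\<^bsub>G\<^esub> = H" using HK by simp
  have q4: "qact G H u H g = H #>\<^bsub>G\<^esub> g" if "g \<in> carrier G" for g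
    using u_one one1 that unfolding qact_def by simp
  have HinK: "H \<in> ?K" using K.one_closed by simp
  have mK: "y <#>\<^bsub>G\<^esub> x \<in> ?K" if "y \<in> ?K" "x \<in> ?K" for x y
    using K.m_closed[OF that] by simp
  have rone: "y <#>\<^bsub>G\<^esub> H = y" if "y \<in> ?K" for y using K.r_one[OF that] by simp
  have massoc: "(x <#>\<^bsub>G\<^esub> y) <#>\<^bsub>G\<^esub> z = x <#>\<^bsub>G\<^esub> (y <#>\<^bsub>G\<^esub> z)"
    if "x \<in> ?K" "y \<in> ?K" "z \<in> ?K" for x y z using K.m_assoc[OF that] by simp
  have hG: "h \<in> carrier G" if "h \<in> H" for h using that HK by blast
  have etaNZ: "\<eta> y a x \<noteq> 0" if "y \<in> ?K" "a \<in> carrier G" "x \<in> ?K" for y a x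
    using \<eta>_nz that by blast
  have etac: "\<eta> y b (qact G H u x a) * \<eta> y a x / \<eta> y (a \<otimes>\<^bsub>G\<^esub> b) x
      = \<mu> a b (y <#>\<^bsub>G\<^esub> x) / \<mu> a b x"
    if "y \<in> ?K" "a \<in> carrier G" "b \<in> carrier G" "x \<in> ?K" for y a b x
    using \<eta>_cob that unfolding cob1_def actC_def shift2_def by simp
  have ntc: "nu_tilde G H \<eta> y1 y2 b (qact G H u x a) * nu_tilde G H \<eta> y1 y2 a x
      = nu_tilde G H \<eta> y1 y2 (a \<otimes>\<^bsub>G\<^esub> b) x"
    if y: "y1 \<in> ?K" "y2 \<in> ?K" and ab: "a \<in> carrier G" "b \<in> carrier G" and x: "x \<in> ?K" for y1 y2 a b x
  proof -
    have y2x: "y2 <#>\<^bsub>G\<^esub> x \<in> ?K" using mK y x by blast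
    have y12: "y1 <#>\<^bsub>G\<^esub> y2 \<in> ?K" using mK y by blast
    have e1: "\<eta> y1 b (y2 <#>\<^bsub>G\<^esub> qact G H u x a) * \<eta> y1 a (y2 <#>\<^bsub>G\<^esub> x)
        / \<eta> y1 (a \<otimes>\<^bsub>G\<^esub> b) (y2 <#>\<^bsub>G\<^esub> x)
        = \<mu> a b ((y1 <#>\<^bsub>G\<^esub> y2) <#>\<^bsub>G\<^esub> x) / \<mu> a b (y2 <#>\<^bsub>G\<^esub> x)"
      using etac[OF y(1) ab y2x] q2[OF y(2) x ab(1)] massoc[OF y x] by simp
    note e2 = etac[OF y(2) ab x]
    note e3 = etac[OF y12 ab x]
    have ab': "a \<otimes>\<^bsub>G\<^esub> b \<in> carrier G" using ab by (simp add: N.m_closed)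
    have qx: "qact G H u x a \<in> ?K" using qK x ab by blast
    have M: "\<mu> a b ((y1 <#>\<^bsub>G\<^esub> y2) <#>\<^bsub>G\<^esub> x) / \<mu> a b (y2 <#>\<^bsub>G\<^esub> x)
       * (\<mu> a b (y2 <#>\<^bsub>G\<^esub> x) / \<mu> a b x)
       = \<mu> a b ((y1 <#>\<^bsub>G\<^esub> y2) <#>\<^bsub>G\<^esub> x) / \<mu> a b x"
      using \<mu>_nz ab y2x by simp
    show ?thesis unfolding nu_tilde_def shift1_def mult_FactGroup
      apply (rule field_coc_aux[OF e1 e2 e3 M])
      using etaNZ y y2x y12 ab ab' x qx mK by auto
  qed
  have ntNZ: "nu_tilde G H \<eta> y1 y2 a x \<noteq> 0"
    if "y1 \<in> ?K" "y2 \<in> ?K" "a \<in> carrier G" "x \<in> ?K" for y1 y2 a x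
    unfolding nu_tilde_def shift1_def mult_FactGroup using that etaNZ mK by simp
  have part1: "is_char G H (nu G H \<eta> y1 y2)" if y: "y1 \<in> ?K" "y2 \<in> ?K" for y1 y2
    unfolding is_char_def nu_def one_FactGroup
  proof (intro conjI ballI)
    fix h assume "h \<in> H"
    then show "nu_tilde G H \<eta> y1 y2 h H \<noteq> 0" using ntNZ y hG HinK by blast
  next
    fix h h' assume h: "h \<in> H" "h' \<in> H"
    have "nu_tilde G H \<eta> y1 y2 (h \<otimes>\<^bsub>G\<^esub> h') H
        = nu_tilde G H \<eta> y1 y2 h' (qact G H u H h) * nu_tilde G H \<eta> y1 y2 h H"
      using ntc[OF y hG[OF h(1)] hG[OF h(2)] HinK] by simp
    then show "nu_tilde G H \<eta> y1 y2 (h \<otimes>\<^bsub>G\<^esub> h') H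
        = nu_tilde G H \<eta> y1 y2 h H * nu_tilde G H \<eta> y1 y2 h' H"
      using q3[OF HinK h(1)] by simp
  qed
  have chr: "char_act G u (nu G H \<eta> y1 y2) y3 h = nu_tilde G H \<eta> y1 y2 h y3"
    if y: "y1 \<in> ?K" "y2 \<in> ?K" "y3 \<in> ?K" and h: "h \<in> H" for y1 y2 y3 h
  proof -
    define g where "g = u y3"
    have g: "g \<in> carrier G" "H #>\<^bsub>G\<^esub> g = y3" using u_sec y(3) g_def by auto
    define h' where "h' = g \<otimes>\<^bsub>G\<^esub> h \<otimes>\<^bsub>G\<^esub> inv\<^bsub>G\<^esub> g"
    have h': "h' \<in> H" unfolding h'_def using N.inv_op_closed2 g h by blast
    have hh: "h' \<otimes>\<^bsub>G\<^esub> g = g \<otimes>\<^bsub>G\<^esub> h" unfolding h'_def using g(1) hG[OF h]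
      by (simp add: N.m_assoc)
    have E1: "nu_tilde G H \<eta> y1 y2 h y3 * nu_tilde G H \<eta> y1 y2 g H
        = nu_tilde G H \<eta> y1 y2 (g \<otimes>\<^bsub>G\<^esub> h) H"
      using ntc[OF y(1,2) g(1) hG[OF h] HinK] q4[OF g(1)] g(2) by simp
    have E2: "nu_tilde G H \<eta> y1 y2 g H * nu_tilde G H \<eta> y1 y2 h' H
        = nu_tilde G H \<eta> y1 y2 (h' \<otimes>\<^bsub>G\<^esub> g) H"
      using ntc[OF y(1,2) hG[OF h'] g(1) HinK] q3[OF HinK h'] by simp
    have nz: "nu_tilde G H \<eta> y1 y2 g H \<noteq> 0" using ntNZ y g HinK by blast
    have "nu_tilde G H \<eta> y1 y2 h' H = nu_tilde G H \<eta> y1 y2 h y3"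
      using E1 E2 hh nz by (metis mult.commute mult_right_cancel)
    then show ?thesis unfolding char_act_def nu_def one_FactGroup h'_def g_def .
  qed
  have part2: "nu G H \<eta> y2 y3 h / nu G H \<eta> (y1 \<otimes>\<^bsub>G Mod H\<^esub> y2) y3 h
         * nu G H \<eta> y1 (y2 \<otimes>\<^bsub>G Mod H\<^esub> y3) h / char_act G u (nu G H \<eta> y1 y2) y3 h = 1"
    if y: "y1 \<in> ?K" "y2 \<in> ?K" "y3 \<in> ?K" and h: "h \<in> H" for y1 y2 y3 h
  proof -
    have hg: "h \<in> carrier G" using hG h .
    have y12: "y1 <#>\<^bsub>G\<^esub> y2 \<in> ?K" and y23: "y2 <#>\<^bsub>G\<^esub> y3 \<in> ?K"
      and y123: "y1 <#>\<^bsub>G\<^esub> y2 <#>\<^bsub>G\<^esub> y3 \<in> ?K" using mK y by blast+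
    have as: "y1 <#>\<^bsub>G\<^esub> (y2 <#>\<^bsub>G\<^esub> y3) = y1 <#>\<^bsub>G\<^esub> y2 <#>\<^bsub>G\<^esub> y3"
      using massoc y by simp
    have nzs: "\<eta> y2 h y3 \<noteq> 0" "\<eta> y3 h H \<noteq> 0" "\<eta> (y2 <#>\<^bsub>G\<^esub> y3) h H \<noteq> 0"
      "\<eta> (y1 <#>\<^bsub>G\<^esub> y2) h y3 \<noteq> 0" "\<eta> (y1 <#>\<^bsub>G\<^esub> y2 <#>\<^bsub>G\<^esub> y3) h H \<noteq> 0"
      "\<eta> y1 h (y2 <#>\<^bsub>G\<^esub> y3) \<noteq> 0"
      using etaNZ y y12 y23 y123 hg HinK by blast+
    show ?thesis unfolding chr[OF y h] unfolding nu_def nu_tilde_def shift1_def mult_FactGroup one_FactGroup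
      using nzs by (simp add: rone y y23 as field_simps)
  qed
  show ?thesis using part1 part2 by blast
qed

end
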